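(* Let $(X_1,\dots,X_n)$ be component lifetimes with a copula $C$ and a common marginal distribution function $F$, and let $T=\psi(X_1,\dots,X_n)$ and $T^*=\psi^*(X_1,\dots,X_n)$ be the lifetimes of two semi-coherent systems built from these components. Then there exists $D\in\mathcal{D}_2$ (determined by $C$ and the minimal cut sets of $\psi$ and $\psi^*$) such that the joint distribution function of $(T,T^* )$ satisfies $\Pr(T\le x,T^*\le y)=D(F(x),F(y))$ for all $x,y$.
   Context: A system is a Boolean function $\psi:\{0,1\}^n\to\{0,1\}$; it is semi-coherent if $\psi$ is increasing, $\psi(0,\dots,0)=0$ and $\psi(1,\dots,1)=1$. A set $A\subseteq\{1,\dots,n\}$ is a cut set of $\psi$ if $\psi(x)=0$ whenever $x_j=0$ for all $j\in A$, and minimal if it contains no other cut set. If $\mathcal{C}_1,\dots,\mathcal{C}_s$ are the minimal cut sets, $\psi(x)=\min_{i}\max_{j\in\mathcal{C}_i}x_j$, and the system lifetime is $T=\min_{i=1,\dots,s}\max_{j\in\mathcal{C}_i}X_j$. $\mathcal{D}_2$ is the set of continuous bivariate distribution functions with support in $[0,1]^2$. *)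

theory Defs
  imports "HOL-Probability.Probability"
begin

text \<open>Components are indexed by {..<n}; a state vector is a function nat => bool
  (True = working), a system is a map (nat => bool) => bool.\<close>

definition semi_coherent :: "nat \<Rightarrow> ((nat \<Rightarrow> bool) \<Rightarrow> bool) \<Rightarrow> bool" where
  "semi_coherent n \<psi> \<longleftrightarrow>
     (\<forall>x y. (\<forall>j<n. x j \<le> y j) \<longrightarrow> \<psi> x \<le> \<psi> y) \<and>
     \<psi> (\<lambda>_. False) = False \<and> \<psi> (\<lambda>_. True) = True"

definition cut_set :: "nat \<Rightarrow> ((nat \<Rightarrow> bool) \<Rightarrow> bool) \<Rightarrow> nat set \<Rightarrow> bool" where
  "cut_set n \<psi> A \<longleftrightarrow> A \<subseteq> {..<n} \<and> (\<forall>x. (\<forall>j\<in>A. \<not> x j) \<longrightarrow> \<not> \<psi> x)"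

definition min_cut_set :: "nat \<Rightarrow> ((nat \<Rightarrow> bool) \<Rightarrow> bool) \<Rightarrow> nat set \<Rightarrow> bool" where
  "min_cut_set n \<psi> A \<longleftrightarrow> cut_set n \<psi> A \<and> (\<forall>B. B \<subset> A \<longrightarrow> \<not> cut_set n \<psi> B)"

definition sys_lifetime :: "nat \<Rightarrow> ((nat \<Rightarrow> bool) \<Rightarrow> bool) \<Rightarrow> (nat \<Rightarrow> real) \<Rightarrow> real" where
  "sys_lifetime n \<psi> x = Min ((\<lambda>A. Max (x ` A)) ` {A. min_cut_set n \<psi> A})"

definition copula :: "nat \<Rightarrow> ((nat \<Rightarrow> real) \<Rightarrow> real) \<Rightarrow> bool" where
  "copula n C \<longleftrightarrow> (\<exists>Q. prob_space Q \<and> sets Q = sets (PiM {..<n} (\<lambda>_. borel :: real measure)) \<and>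
     (\<forall>j<n. \<forall>t\<in>{0..1}. measure Q {v\<in>space Q. v j \<le> t} = t) \<and>
     (\<forall>u. (\<forall>j<n. u j \<in> {0..1}) \<longrightarrow> C u = measure Q {v\<in>space Q. \<forall>j<n. v j \<le> u j}))"

definition has_copula_marginal ::
  "'a measure \<Rightarrow> nat \<Rightarrow> (nat \<Rightarrow> 'a \<Rightarrow> real) \<Rightarrow> ((nat \<Rightarrow> real) \<Rightarrow> real) \<Rightarrow> (real \<Rightarrow> real) \<Rightarrow> bool" where
  "has_copula_marginal M n X C F \<longleftrightarrow>
     (\<forall>j<n. \<forall>t. measure M {\<omega>\<in>space M. X j \<omega> \<le> t} = F t) \<and>
     (\<forall>x. measure M {\<omega>\<in>space M. \<forall>j<n. X j \<omega> \<le> x j} = C (\<lambda>j. F (x j)))"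

definition D2 :: "(real \<Rightarrow> real \<Rightarrow> real) set" where
  "D2 = {D. continuous_on UNIV (\<lambda>z. D (fst z) (snd z)) \<and>
        (\<exists>Q. prob_space Q \<and> sets Q = sets (borel :: (real \<times> real) measure) \<and>
             measure Q ({0..1} \<times> {0..1}) = 1 \<and>
             (\<forall>u v. D u v = measure Q ({..u} \<times> {..v})))}"

end

theory Submission imports Defs begin

lemma atoms_gen:
  assumes fin: "finite I" and M: "prob_space M" and N: "prob_space N"
    and A: "\<And>i. i \<in> I \<Longrightarrow> A i \<in> sets M" and B: "\<And>i. i \<in> I \<Longrightarrow> B i \<in> sets N"
    and h: "\<And>S. S \<subseteq> I \<Longrightarrow> measure M {\<omega>\<in>space M. \<forall>i\<in>S. \<omega> \<in> A i} = measure N {\<omega>\<in>space N. \<forall>i\<in>S. \<omega> \<in> B i}"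
  shows "T \<subseteq> I \<Longrightarrow> S \<subseteq> I \<Longrightarrow> measure M {\<omega>\<in>space M. (\<forall>i\<in>S. \<omega> \<in> A i) \<and> (\<forall>i\<in>T. \<omega> \<notin> A i)}
       = measure N {\<omega>\<in>space N. (\<forall>i\<in>S. \<omega> \<in> B i) \<and> (\<forall>i\<in>T. \<omega> \<notin> B i)}"
proof (induction T arbitrary: S rule: infinite_finite_induct)
  case (infinite T) then show ?case using fin finite_subset by blast
next
  case empty then show ?case using h by simp
next
  case (insert t T)
  interpret M: prob_space M by fact
  interpret N: prob_space N by fact
  have fT: "finite T" by fact
  have tI: "t \<in> I" and TI: "T \<subseteq> I" using insert by auto
  have SM: "\<And>S. S \<subseteq> I \<Longrightarrow> {\<omega>\<in>space M. (\<forall>i\<in>S. \<omega> \<in> A i) \<and> (\<forall>i\<in>T. \<omega> \<notin> A i)} \<in> sets M"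
    using A fin fT TI
    by (intro sets.sets_Collect_conj sets.sets_Collect_finite_All)
       (auto intro!: sets.sets_Collect_neg intro: finite_subset[OF _ fin] simp: subset_iff Int_def[symmetric] sets.Int_space_eq1)
  have SN: "\<And>S. S \<subseteq> I \<Longrightarrow> {\<omega>\<in>space N. (\<forall>i\<in>S. \<omega> \<in> B i) \<and> (\<forall>i\<in>T. \<omega> \<notin> B i)} \<in> sets N"
    using B fin fT TI
    by (intro sets.sets_Collect_conj sets.sets_Collect_finite_All)
       (auto intro!: sets.sets_Collect_neg intro: finite_subset[OF _ fin] simp: subset_iff Int_def[symmetric] sets.Int_space_eq1)
  let ?EM = "{\<omega>\<in>space M. (\<forall>i\<in>S. \<omega> \<in> A i) \<and> (\<forall>i\<in>T. \<omega> \<notin> A i)}"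
  let ?FM = "{\<omega>\<in>space M. (\<forall>i\<in>insert t S. \<omega> \<in> A i) \<and> (\<forall>i\<in>T. \<omega> \<notin> A i)}"
  let ?EN = "{\<omega>\<in>space N. (\<forall>i\<in>S. \<omega> \<in> B i) \<and> (\<forall>i\<in>T. \<omega> \<notin> B i)}"
  let ?FN = "{\<omega>\<in>space N. (\<forall>i\<in>insert t S. \<omega> \<in> B i) \<and> (\<forall>i\<in>T. \<omega> \<notin> B i)}"
  have eM: "{\<omega>\<in>space M. (\<forall>i\<in>S. \<omega> \<in> A i) \<and> (\<forall>i\<in>insert t T. \<omega> \<notin> A i)} = ?EM - ?FM" by auto
  have eN: "{\<omega>\<in>space N. (\<forall>i\<in>S. \<omega> \<in> B i) \<and> (\<forall>i\<in>insert t T. \<omega> \<notin> B i)} = ?EN - ?FN" by auto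
  have "measure M (?EM - ?FM) = measure M ?EM - measure M ?FM"
    using SM[of S] SM[of "insert t S"] insert.prems tI by (intro M.finite_measure_Diff) auto
  moreover have "measure N (?EN - ?FN) = measure N ?EN - measure N ?FN"
    using SN[of S] SN[of "insert t S"] insert.prems tI by (intro N.finite_measure_Diff) auto
  moreover have "measure M ?EM = measure N ?EN" using insert.IH[of S] insert.prems by auto
  moreover have "measure M ?FM = measure N ?FN" using insert.IH[of "insert t S"] insert.prems tI by auto
  ultimately show ?case using eM eN by simp
qed

lemma atoms_union:
  assumes fin: "finite I" and M: "prob_space M" and N: "prob_space N"
    and A: "\<And>i. i \<in> I \<Longrightarrow> A i \<in> sets M" and B: "\<And>i. i \<in> I \<Longrightarrow> B i \<in> sets N"
    and h: "\<And>S. S \<subseteq> I \<Longrightarrow> measure M {\<omega>\<in>space M. \<forall>i\<in>S. \<omega> \<in> A i} = measure N {\<omega>\<in>space N. \<forall>i\<in>S. \<omega> \<in> B i}"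
  shows "measure M {\<omega>\<in>space M. {i\<in>I. \<omega> \<in> A i} \<in> W} = measure N {\<omega>\<in>space N. {i\<in>I. \<omega> \<in> B i} \<in> W}"
proof -
  interpret M: prob_space M by fact
  interpret N: prob_space N by fact
  define K where "K = W \<inter> Pow I"
  have fK: "finite K" unfolding K_def using fin by auto
  define aM where "aM = (\<lambda>k. {\<omega>\<in>space M. (\<forall>i\<in>k. \<omega> \<in> A i) \<and> (\<forall>i\<in>I-k. \<omega> \<notin> A i)})"
  define aN where "aN = (\<lambda>k. {\<omega>\<in>space N. (\<forall>i\<in>k. \<omega> \<in> B i) \<and> (\<forall>i\<in>I-k. \<omega> \<notin> B i)})"
  have eM: "{\<omega>\<in>space M. {i\<in>I. \<omega> \<in> A i} \<in> W} = (\<Union>k\<in>K. aM k)"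
    unfolding aM_def K_def
  proof (intro set_eqI iffI)
    fix x assume "x \<in> {\<omega>\<in>space M. {i\<in>I. \<omega> \<in> A i} \<in> W}"
    then show "x \<in> (\<Union>k\<in>W \<inter> Pow I. {\<omega>\<in>space M. (\<forall>i\<in>k. \<omega> \<in> A i) \<and> (\<forall>i\<in>I-k. \<omega> \<notin> A i)})"
      by (auto intro!: bexI[of _ "{i\<in>I. x \<in> A i}"])
  next
    fix x assume "x \<in> (\<Union>k\<in>W \<inter> Pow I. {\<omega>\<in>space M. (\<forall>i\<in>k. \<omega> \<in> A i) \<and> (\<forall>i\<in>I-k. \<omega> \<notin> A i)})"
    then obtain k where k: "k \<in> W" "k \<subseteq> I" "x \<in> space M" "\<forall>i\<in>k. x \<in> A i" "\<forall>i\<in>I-k. x \<notin> A i" by auto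
    then have "{i\<in>I. x \<in> A i} = k" by auto
    then show "x \<in> {\<omega>\<in>space M. {i\<in>I. \<omega> \<in> A i} \<in> W}" using k by auto
  qed
  have eN: "{\<omega>\<in>space N. {i\<in>I. \<omega> \<in> B i} \<in> W} = (\<Union>k\<in>K. aN k)"
    unfolding aN_def K_def
  proof (intro set_eqI iffI)
    fix x assume "x \<in> {\<omega>\<in>space N. {i\<in>I. \<omega> \<in> B i} \<in> W}"
    then show "x \<in> (\<Union>k\<in>W \<inter> Pow I. {\<omega>\<in>space N. (\<forall>i\<in>k. \<omega> \<in> B i) \<and> (\<forall>i\<in>I-k. \<omega> \<notin> B i)})"
      by (auto intro!: bexI[of _ "{i\<in>I. x \<in> B i}"])
  next
    fix x assume "x \<in> (\<Union>k\<in>W \<inter> Pow I. {\<omega>\<in>space N. (\<forall>i\<in>k. \<omega> \<in> B i) \<and> (\<forall>i\<in>I-k. \<omega> \<notin> B i)})"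
    then obtain k where k: "k \<in> W" "k \<subseteq> I" "x \<in> space N" "\<forall>i\<in>k. x \<in> B i" "\<forall>i\<in>I-k. x \<notin> B i" by auto
    then have "{i\<in>I. x \<in> B i} = k" by auto
    then show "x \<in> {\<omega>\<in>space N. {i\<in>I. \<omega> \<in> B i} \<in> W}" using k by auto
  qed
  have sM: "aM k \<in> sets M" if "k \<in> K" for k
    using A fin that unfolding aM_def K_def
    by (intro sets.sets_Collect_conj sets.sets_Collect_finite_All)
       (auto intro!: sets.sets_Collect_neg intro: finite_subset[OF _ fin] simp: subset_iff Int_def[symmetric] sets.Int_space_eq1)
  have sN: "aN k \<in> sets N" if "k \<in> K" for k
    using B fin that unfolding aN_def K_def
    by (intro sets.sets_Collect_conj sets.sets_Collect_finite_All)
       (auto intro!: sets.sets_Collect_neg intro: finite_subset[OF _ fin] simp: subset_iff Int_def[symmetric] sets.Int_space_eq1)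
  have dM: "disjoint_family_on aM K"
    unfolding disjoint_family_on_def aM_def K_def by auto
  have dN: "disjoint_family_on aN K"
    unfolding disjoint_family_on_def aN_def K_def by auto
  have "measure M (\<Union>k\<in>K. aM k) = (\<Sum>k\<in>K. measure M (aM k))"
    using fK sM dM by (intro measure_finite_Union) auto
  also have "\<dots> = (\<Sum>k\<in>K. measure N (aN k))"
  proof (rule sum.cong)
    fix k assume "k \<in> K"
    then show "measure M (aM k) = measure N (aN k)"
      unfolding aM_def aN_def K_def
      by (intro atoms_gen[OF fin M N A B h]) auto
  qed simp
  also have "\<dots> = measure N (\<Union>k\<in>K. aN k)"
    using fK sN dN by (intro measure_finite_Union[symmetric]) auto
  finally show ?thesis using eM eN by simp
qed

lemma sc_D:
  assumes "semi_coherent n \<psi>"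
  shows "\<And>x y. (\<forall>j<n. x j \<le> y j) \<Longrightarrow> \<psi> x \<le> \<psi> y" "\<not> \<psi> (\<lambda>_. False)" "\<psi> (\<lambda>_. True)"
  using assms unfolding semi_coherent_def by blast+

lemma sc_n_pos: "semi_coherent n \<psi> \<Longrightarrow> 0 < n"
proof (rule ccontr)
  assume sc: "semi_coherent n \<psi>" and "\<not> 0 < n"
  then have "n = 0" by simp
  then have "\<psi> (\<lambda>_. True) \<le> \<psi> (\<lambda>_. False)" by (intro sc_D(1)[OF sc]) simp
  with sc_D(2,3)[OF sc] show False by simp
qed

lemma sc_cut_all: "semi_coherent n \<psi> \<Longrightarrow> cut_set n \<psi> {..<n}"
proof -
  assume sc: "semi_coherent n \<psi>"
  have "\<not> \<psi> x" if "\<forall>j\<in>{..<n}. \<not> x j" for x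
  proof -
    have "\<psi> x \<le> \<psi> (\<lambda>_. False)" using that by (intro sc_D(1)[OF sc]) simp
    then show ?thesis using sc_D(2)[OF sc] by simp
  qed
  then show ?thesis unfolding cut_set_def by blast
qed

lemma sc_not_cut_empty: "semi_coherent n \<psi> \<Longrightarrow> \<not> cut_set n \<psi> {}"
proof
  assume sc: "semi_coherent n \<psi>" and "cut_set n \<psi> {}"
  then have "\<not> \<psi> (\<lambda>_. True)" unfolding cut_set_def by blast
  with sc_D(3)[OF sc] show False by blast
qed

lemma mcs_props:
  assumes "semi_coherent n \<psi>"
  shows "finite {A. min_cut_set n \<psi> A}" "{A. min_cut_set n \<psi> A} \<noteq> {}"
    "\<And>A. min_cut_set n \<psi> A \<Longrightarrow> A \<noteq> {} \<and> A \<subseteq> {..<n}"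
proof -
  show "finite {A. min_cut_set n \<psi> A}"
    by (rule finite_subset[of _ "Pow {..<n}"]) (simp_all add: min_cut_set_def cut_set_def subset_iff)
  show "A \<noteq> {} \<and> A \<subseteq> {..<n}" if "min_cut_set n \<psi> A" for A
  proof -
    have c: "cut_set n \<psi> A" using that by (simp add: min_cut_set_def)
    then have "A \<subseteq> {..<n}" by (simp add: cut_set_def)
    moreover have "A \<noteq> {}" using c sc_not_cut_empty[OF assms] by blast
    ultimately show ?thesis by blast
  qed
  obtain A where A: "cut_set n \<psi> A" "\<And>B. cut_set n \<psi> B \<Longrightarrow> card A \<le> card B"
    using ex_has_least_nat[of "cut_set n \<psi>" "{..<n}" card] sc_cut_all[OF assms] by blast
  have "min_cut_set n \<psi> A"
    unfolding min_cut_set_def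
  proof (intro conjI allI impI notI)
    fix B assume B: "B \<subset> A" "cut_set n \<psi> B"
    have "A \<subseteq> {..<n}" using A(1) by (simp add: cut_set_def)
    then have fA: "finite A" using finite_subset by blast
    show False using psubset_card_mono[OF fA B(1)] A(2)[OF B(2)] by simp
  qed (use A in blast)
  then show "{A. min_cut_set n \<psi> A} \<noteq> {}" by auto
qed

lemma T_le:
  assumes "semi_coherent n \<psi>"
  shows "sys_lifetime n \<psi> w \<le> u \<longleftrightarrow> (\<exists>A. min_cut_set n \<psi> A \<and> (\<forall>j\<in>A. w j \<le> u))"
proof -
  note p = mcs_props[OF assms]
  have fA: "finite A" if "min_cut_set n \<psi> A" for A
    using p(3)[OF that] finite_subset by blast
  have mx: "Max (w ` A) \<le> u \<longleftrightarrow> (\<forall>j\<in>A. w j \<le> u)" if "min_cut_set n \<psi> A" for A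
    using fA[OF that] p(3)[OF that] by (subst Max_le_iff) auto
  have "sys_lifetime n \<psi> w \<le> u \<longleftrightarrow> (\<exists>a\<in>(\<lambda>A. Max (w ` A)) ` {A. min_cut_set n \<psi> A}. a \<le> u)"
    unfolding sys_lifetime_def using p(1,2) by (intro Min_le_iff) auto
  also have "\<dots> \<longleftrightarrow> (\<exists>A. min_cut_set n \<psi> A \<and> (\<forall>j\<in>A. w j \<le> u))"
    using mx by blast
  finally show ?thesis .
qed

lemma T_mem:
  assumes "semi_coherent n \<psi>"
  shows "\<exists>j<n. sys_lifetime n \<psi> w = w j"
proof -
  note p = mcs_props[OF assms]
  have fA: "finite A" if "min_cut_set n \<psi> A" for A
    using p(3)[OF that] finite_subset by blast
  have "sys_lifetime n \<psi> w \<in> (\<lambda>A. Max (w ` A)) ` {A. min_cut_set n \<psi> A}"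
    unfolding sys_lifetime_def using p by (intro Min_in) auto
  then obtain A where A: "min_cut_set n \<psi> A" "sys_lifetime n \<psi> w = Max (w ` A)" by auto
  have "Max (w ` A) \<in> w ` A" using p(3)[OF A(1)] fA[OF A(1)] by (intro Max_in) auto
  then show ?thesis using A p(3)[OF A(1)] by auto
qed

lemma le_set_meas: "f \<in> borel_measurable N \<Longrightarrow> {x\<in>space N. f x \<le> (c::real)} \<in> sets N"
  using borel_measurable_iff_le by blast

lemma key_S:
  fixes M :: "'a measure" and Q :: "(nat \<Rightarrow> real) measure" and z :: "bool \<Rightarrow> real"
  assumes M: "prob_space M" and Xm: "\<And>j. j<n \<Longrightarrow> X j \<in> borel_measurable M"
   and hcm: "has_copula_marginal M n X C F" and n: "0<n"
   and Q: "prob_space Q" and Qm: "\<And>j. j<n \<Longrightarrow> (\<lambda>w. w j) \<in> borel_measurable Q"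
   and unif: "\<And>j t. j<n \<Longrightarrow> t\<in>{0..1} \<Longrightarrow> measure Q {v\<in>space Q. v j \<le> t} = t"
   and CQ: "\<And>u. (\<forall>j<n. u j \<in> {0..1}) \<Longrightarrow> C u = measure Q {v\<in>space Q. \<forall>j<n. v j \<le> u j}"
   and S: "S \<subseteq> {..<n} \<times> UNIV"
  shows "measure M {\<omega>\<in>space M. \<forall>i\<in>S. X (fst i) \<omega> \<le> z (snd i)}
       = measure Q {w\<in>space Q. \<forall>i\<in>S. w (fst i) \<le> F (z (snd i))}"
proof -
  interpret M: prob_space M by fact
  interpret Q: prob_space Q by fact
  have Fdef: "\<And>t. F t = measure M {\<omega>\<in>space M. X 0 \<omega> \<le> t}"
    using hcm n by (simp add: has_copula_marginal_def)
  have Fj: "\<And>j t. j < n \<Longrightarrow> measure M {\<omega>\<in>space M. X j \<omega> \<le> t} = F t"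
    using hcm by (simp add: has_copula_marginal_def)
  have sX: "\<And>j c. j < n \<Longrightarrow> {\<omega>\<in>space M. X j \<omega> \<le> c} \<in> sets M"
    using Xm le_set_meas by blast
  have sW: "\<And>j c. j < n \<Longrightarrow> {w\<in>space Q. w j \<le> c} \<in> sets Q"
    using Qm le_set_meas by blast
  have F01: "0 \<le> F t \<and> F t \<le> 1" for t
    unfolding Fdef by simp
  have Fmono: "F a \<le> F b" if "a \<le> b" for a b
    unfolding Fdef using that sX[OF n] by (intro M.finite_measure_mono) auto
  have Fmin: "F (min a b) = min (F a) (F b)" for a b
    using Fmono[of a b] Fmono[of b a] by (cases "a \<le> b") (auto simp: min_def)
  have fS: "finite S" using S by (rule finite_subset) auto
  define m where "m j = (if (j,True)\<in>S \<and> (j,False)\<in>S then min (z True) (z False)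
      else if (j,True)\<in>S then z True else z False)" for j
  have ma: "c \<le> m j \<longleftrightarrow> (\<forall>b. (j,b)\<in>S \<longrightarrow> c \<le> z b)" if "\<exists>b. (j,b)\<in>S" for j c
    using that unfolding m_def by (auto simp: all_bool_eq) (metis (full_types))+
  have mb: "c \<le> F (m j) \<longleftrightarrow> (\<forall>b. (j,b)\<in>S \<longrightarrow> c \<le> F (z b))" if "\<exists>b. (j,b)\<in>S" for j c
    using that unfolding m_def by (auto simp: all_bool_eq Fmin) (metis (full_types))+
  define t where "t L j = (if \<exists>b. (j,b)\<in>S then m j else L)" for L j
  define EM where "EM = {\<omega>\<in>space M. \<forall>i\<in>S. X (fst i) \<omega> \<le> z (snd i)}"
  define EQ where "EQ = {w\<in>space Q. \<forall>i\<in>S. w (fst i) \<le> F (z (snd i))}"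
  have sEM: "EM \<in> sets M" unfolding EM_def
    using S fS by (intro sets.sets_Collect_finite_All) (auto intro!: sX)
  have sEQ: "EQ \<in> sets Q" unfolding EQ_def
    using S fS by (intro sets.sets_Collect_finite_All) (auto intro!: sW)
  have bound: "\<bar>measure M EM - measure Q EQ\<bar> \<le> real n * (1 - F L)" for L
  proof -
    define EML where "EML = {\<omega>\<in>space M. \<forall>j<n. X j \<omega> \<le> t L j}"
    define EQL where "EQL = {w\<in>space Q. \<forall>j<n. w j \<le> F (t L j)}"
    define UM where "UM = (\<Union>j\<in>{..<n}. space M - {\<omega>\<in>space M. X j \<omega> \<le> L})"
    define UQ where "UQ = (\<Union>j\<in>{..<n}. space Q - {w\<in>space Q. w j \<le> F L})"
    have sEML: "EML \<in> sets M" unfolding EML_def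
      using sets.sets_Collect_finite_All[where S="{..<n}" and P="\<lambda>j \<omega>. X j \<omega> \<le> t L j" and M=M] sX by auto
    have sEQL: "EQL \<in> sets Q" unfolding EQL_def
      using sets.sets_Collect_finite_All[where S="{..<n}" and P="\<lambda>j w. w j \<le> F (t L j)" and M=Q] sW by auto
    have sUM: "UM \<in> sets M" unfolding UM_def by (intro sets.finite_UN finite_lessThan ballI sets.Diff[OF sets.top] sX) auto
    have sUQ: "UQ \<in> sets Q" unfolding UQ_def by (intro sets.finite_UN finite_lessThan ballI sets.Diff[OF sets.top] sW) auto
    have eq: "measure M EML = measure Q EQL"
    proof -
      have "measure M EML = C (\<lambda>j. F (t L j))" unfolding EML_def
        using hcm by (simp add: has_copula_marginal_def)
      also have "\<dots> = measure Q EQL" unfolding EQL_def using F01 by (intro CQ) auto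
      finally show ?thesis .
    qed
    have UMb: "measure M UM \<le> real n * (1 - F L)"
    proof -
      have "measure M UM \<le> (\<Sum>j\<in>{..<n}. measure M (space M - {\<omega>\<in>space M. X j \<omega> \<le> L}))"
        unfolding UM_def using sX by (intro M.finite_measure_subadditive_finite) auto
      also have "\<dots> = (\<Sum>j\<in>{..<n}. 1 - F L)"
        using sX Fj by (intro sum.cong) (auto simp: M.prob_compl)
      finally show ?thesis by simp
    qed
    have UQb: "measure Q UQ \<le> real n * (1 - F L)"
    proof -
      have "measure Q UQ \<le> (\<Sum>j\<in>{..<n}. measure Q (space Q - {w\<in>space Q. w j \<le> F L}))"
        unfolding UQ_def using sW by (intro Q.finite_measure_subadditive_finite) auto
      also have "\<dots> = (\<Sum>j\<in>{..<n}. 1 - F L)"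
        using sW unif F01 by (intro sum.cong) (auto simp: Q.prob_compl)
      finally show ?thesis by simp
    qed
    have M1: "EML \<subseteq> EM"
    proof
      fix \<omega> assume "\<omega> \<in> EML"
      then have w: "\<omega> \<in> space M" "\<And>j. j<n \<Longrightarrow> X j \<omega> \<le> t L j" unfolding EML_def by auto
      have "X j \<omega> \<le> z b" if "(j,b) \<in> S" for j b
      proof -
        have "j < n" using that S by auto
        then have "X j \<omega> \<le> m j" using w(2)[of j] that unfolding t_def by (auto split: if_splits)
        then show ?thesis using ma[of j "X j \<omega>"] that by blast
      qed
      then show "\<omega> \<in> EM" unfolding EM_def using w(1) by auto
    qed
    have M2: "EM \<subseteq> EML \<union> UM"
    proof
      fix \<omega> assume "\<omega> \<in> EM"
      then have w: "\<omega> \<in> space M" "\<And>j b. (j,b)\<in>S \<Longrightarrow> X j \<omega> \<le> z b" unfolding EM_def by auto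
      show "\<omega> \<in> EML \<union> UM"
      proof (cases "\<forall>j<n. X j \<omega> \<le> L")
        case True
        have "X j \<omega> \<le> t L j" if "j < n" for j
        proof (cases "\<exists>b. (j,b)\<in>S")
          case True then show ?thesis unfolding t_def using ma[of j "X j \<omega>"] w(2) by auto
        next
          case False then show ?thesis unfolding t_def using \<open>\<forall>j<n. X j \<omega> \<le> L\<close> that by auto
        qed
        then show ?thesis unfolding EML_def using w(1) by auto
      next
        case False then show ?thesis unfolding UM_def using w(1) by auto
      qed
    qed
    have Q1: "EQL \<subseteq> EQ"
    proof
      fix \<omega> assume "\<omega> \<in> EQL"
      then have w: "\<omega> \<in> space Q" "\<And>j. j<n \<Longrightarrow> \<omega> j \<le> F (t L j)" unfolding EQL_def by auto
      have "\<omega> j \<le> F (z b)" if "(j,b) \<in> S" for j b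
      proof -
        have "j < n" using that S by auto
        then have "\<omega> j \<le> F (m j)" using w(2)[of j] that unfolding t_def by (auto split: if_splits)
        then show ?thesis using mb[of j "\<omega> j"] that by blast
      qed
      then show "\<omega> \<in> EQ" unfolding EQ_def using w(1) by auto
    qed
    have Q2: "EQ \<subseteq> EQL \<union> UQ"
    proof
      fix \<omega> assume "\<omega> \<in> EQ"
      then have w: "\<omega> \<in> space Q" "\<And>j b. (j,b)\<in>S \<Longrightarrow> \<omega> j \<le> F (z b)" unfolding EQ_def by auto
      show "\<omega> \<in> EQL \<union> UQ"
      proof (cases "\<forall>j<n. \<omega> j \<le> F L")
        case True
        have "\<omega> j \<le> F (t L j)" if "j < n" for j
        proof (cases "\<exists>b. (j,b)\<in>S")
          case True then show ?thesis unfolding t_def using mb[of j "\<omega> j"] w(2) by auto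
        next
          case False then show ?thesis unfolding t_def using \<open>\<forall>j<n. \<omega> j \<le> F L\<close> that by auto
        qed
        then show ?thesis unfolding EQL_def using w(1) by auto
      next
        case False then show ?thesis unfolding UQ_def using w(1) by auto
      qed
    qed
    have a1: "measure M EML \<le> measure M EM" using M1 sEM by (rule M.finite_measure_mono)
    have a2: "measure M EM \<le> measure M EML + measure M UM"
      using M.finite_measure_mono[OF M2] measure_Un_le[OF sEML sUM] sEML sUM by auto
    have b1: "measure Q EQL \<le> measure Q EQ" using Q1 sEQ by (rule Q.finite_measure_mono)
    have b2: "measure Q EQ \<le> measure Q EQL + measure Q UQ"
      using Q.finite_measure_mono[OF Q2] measure_Un_le[OF sEQL sUQ] sEQL sUQ by auto
    show ?thesis using a1 a2 b1 b2 eq UMb UQb by linarith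
  qed
  define A where "A k = {\<omega>\<in>space M. X 0 \<omega> \<le> real k}" for k
  have lim: "(\<lambda>k. F (real k)) \<longlonglongrightarrow> 1"
  proof -
    have "(\<lambda>k. measure M (A k)) \<longlonglongrightarrow> measure M (\<Union>k. A k)"
      using sX[OF n] by (intro M.finite_Lim_measure_incseq) (auto simp: A_def incseq_def)
    moreover have "(\<Union>k. A k) = space M"
    proof (intro set_eqI iffI)
      fix \<omega> assume "\<omega> \<in> space M"
      then have "\<omega> \<in> A (nat \<lceil>X 0 \<omega>\<rceil>)" unfolding A_def by (auto simp: real_nat_ceiling_ge)
      then show "\<omega> \<in> (\<Union>k. A k)" by blast
    qed (auto simp: A_def)
    ultimately show ?thesis unfolding Fdef A_def by (simp add: M.prob_space)
  qed
  have "(\<lambda>k. real n * (1 - F (real k))) \<longlonglongrightarrow> real n * (1 - 1)"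
    by (intro tendsto_intros lim)
  then have "\<bar>measure M EM - measure Q EQ\<bar> \<le> real n * (1 - 1)"
    using bound by (intro LIMSEQ_le_const) auto
  then show ?thesis unfolding EM_def EQ_def by simp
qed

lemma T_meas:
  assumes sc: "semi_coherent n \<psi>" and Qm: "\<And>j. j<n \<Longrightarrow> (\<lambda>w. w j) \<in> borel_measurable Q"
  shows "sys_lifetime n \<psi> \<in> borel_measurable Q"
proof (subst borel_measurable_iff_le, intro allI)
  fix a
  note p = mcs_props[OF sc]
  have fA: "finite A" if "A \<in> {A. min_cut_set n \<psi> A}" for A
    using p(3) that finite_subset by blast
  have "{w \<in> space Q. sys_lifetime n \<psi> w \<le> a} = {w \<in> space Q. \<exists>A\<in>{A. min_cut_set n \<psi> A}. \<forall>j\<in>A. w j \<le> a}"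
    using T_le[OF sc] by auto
  also have "\<dots> \<in> sets Q"
  proof (intro sets.sets_Collect_finite_Ex sets.sets_Collect_finite_All p(1))
    fix A j assume "A \<in> {A. min_cut_set n \<psi> A}" "j \<in> A"
    then have "j < n" using p(3) by auto
    then show "{w \<in> space Q. w j \<le> a} \<in> sets Q" using Qm le_set_meas by blast
  qed (use fA in auto)
  finally show "{w \<in> space Q. sys_lifetime n \<psi> w \<le> a} \<in> sets Q" .
qed

lemma interval_bound:
  assumes Q: "prob_space Q" and Qm: "(\<lambda>w. w j) \<in> borel_measurable Q"
   and unif: "\<And>t. t\<in>{0..1} \<Longrightarrow> measure Q {v\<in>space Q. v j \<le> t} = t"
   and ab: "a \<le> b"
  shows "measure Q {w\<in>space Q. a < w j \<and> w j \<le> b} \<le> b - a"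
proof -
  interpret Q: prob_space Q by fact
  have s: "\<And>c. {w\<in>space Q. w j \<le> c} \<in> sets Q" using Qm le_set_meas by blast
  define cl where "cl t = max 0 (min 1 t)" for t :: real
  have G: "measure Q {v\<in>space Q. v j \<le> t} = cl t" for t
  proof -
    consider "t < 0" | "t \<in> {0..1}" | "1 < t" by fastforce
    then show ?thesis
    proof cases
      case 1
      have "measure Q {v\<in>space Q. v j \<le> t} \<le> measure Q {v\<in>space Q. v j \<le> 0}"
        using 1 s by (intro Q.finite_measure_mono) auto
      moreover have "cl t = 0" using 1 by (simp add: cl_def)
      ultimately show ?thesis using unif[of 0] measure_nonneg[of Q "{v\<in>space Q. v j \<le> t}"] by simp
    next
      case 2 then show ?thesis using unif by (auto simp: cl_def)
    next
      case 3
      have "measure Q {v\<in>space Q. v j \<le> 1} \<le> measure Q {v\<in>space Q. v j \<le> t}"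
        using 3 s by (intro Q.finite_measure_mono) auto
      moreover have "cl t = 1" using 3 by (simp add: cl_def)
      ultimately show ?thesis using unif[of 1] Q.prob_le_1[of "{v\<in>space Q. v j \<le> t}"] by simp
    qed
  qed
  have "{w\<in>space Q. a < w j \<and> w j \<le> b} = {w\<in>space Q. w j \<le> b} - {w\<in>space Q. w j \<le> a}" by auto
  then have "measure Q {w\<in>space Q. a < w j \<and> w j \<le> b} = cl b - cl a"
  proof -
    have "measure Q ({w\<in>space Q. w j \<le> b} - {w\<in>space Q. w j \<le> a})
        = measure Q {w\<in>space Q. w j \<le> b} - measure Q {w\<in>space Q. w j \<le> a}"
      using s ab by (intro Q.finite_measure_Diff) auto
    then show ?thesis using \<open>{w\<in>space Q. a < w j \<and> w j \<le> b} = _\<close> G by simp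
  qed
  also have "\<dots> \<le> b - a" using ab unfolding cl_def by auto
  finally show ?thesis .
qed

lemma D_bound:
  assumes Q: "prob_space Q" and Qm: "\<And>j. j<n \<Longrightarrow> (\<lambda>w. w j) \<in> borel_measurable Q"
   and unif: "\<And>j t. j<n \<Longrightarrow> t\<in>{0..1} \<Longrightarrow> measure Q {v\<in>space Q. v j \<le> t} = t"
   and sc: "semi_coherent n \<psi>" and sc': "semi_coherent n \<psi>'"
  shows "measure Q {w\<in>space Q. sys_lifetime n \<psi> w \<le> u \<and> sys_lifetime n \<psi>' w \<le> v}
    \<le> measure Q {w\<in>space Q. sys_lifetime n \<psi> w \<le> u' \<and> sys_lifetime n \<psi>' w \<le> v'}
       + real n * \<bar>u - u'\<bar> + real n * \<bar>v - v'\<bar>"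
proof -
  interpret Q: prob_space Q by fact
  let ?T = "sys_lifetime n \<psi>" and ?T' = "sys_lifetime n \<psi>'"
  define E where "E = {w\<in>space Q. ?T w \<le> u \<and> ?T' w \<le> v}"
  define E' where "E' = {w\<in>space Q. ?T w \<le> u' \<and> ?T' w \<le> v'}"
  define R where "R a b = (\<Union>j\<in>{..<n}. {w\<in>space Q. a < w j \<and> w j \<le> b})" for a b
  have s: "\<And>j c. j<n \<Longrightarrow> {w\<in>space Q. w j \<le> c} \<in> sets Q" using Qm le_set_meas by blast
  have sI: "{w\<in>space Q. a < w j \<and> w j \<le> b} \<in> sets Q" if "j < n" for a b j
  proof -
    have "{w\<in>space Q. a < w j \<and> w j \<le> b} = {w\<in>space Q. w j \<le> b} - {w\<in>space Q. w j \<le> a}" by auto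
    then show ?thesis using s[OF that] by auto
  qed
  have sR: "R a b \<in> sets Q" for a b unfolding R_def using sI by auto
  have mR: "measure Q (R a b) \<le> real n * (b - a)" if "a \<le> b" for a b
  proof -
    have "measure Q (R a b) \<le> (\<Sum>j\<in>{..<n}. measure Q {w\<in>space Q. a < w j \<and> w j \<le> b})"
      unfolding R_def using sI by (intro Q.finite_measure_subadditive_finite) auto
    also have "\<dots> \<le> (\<Sum>j\<in>{..<n}. b - a)"
      using interval_bound[OF Q Qm unif that] by (intro sum_mono) auto
    finally show ?thesis by simp
  qed
  have sE': "E' \<in> sets Q" unfolding E'_def
    using T_meas[OF sc Qm] T_meas[OF sc' Qm] le_set_meas by (intro sets.sets_Collect_conj) auto
  have sub: "E \<subseteq> E' \<union> R (min u u') (max u u') \<union> R (min v v') (max v v')"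
  proof
    fix w assume "w \<in> E"
    then have w: "w \<in> space Q" "?T w \<le> u" "?T' w \<le> v" unfolding E_def by auto
    obtain j where j: "j < n" "?T w = w j" using T_mem[OF sc] by blast
    obtain j' where j': "j' < n" "?T' w = w j'" using T_mem[OF sc'] by blast
    show "w \<in> E' \<union> R (min u u') (max u u') \<union> R (min v v') (max v v')"
    proof (cases "?T w \<le> u'")
      case False
      then have "w \<in> R (min u u') (max u u')" unfolding R_def using w j by (auto intro!: bexI[of _ j])
      then show ?thesis by blast
    next
      case True
      show ?thesis
      proof (cases "?T' w \<le> v'")
        case False
        then have "w \<in> R (min v v') (max v v')" unfolding R_def using w j' by (auto intro!: bexI[of _ j'])
        then show ?thesis by blast
      next
        case True2: True
        then show ?thesis using True w unfolding E'_def by auto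
      qed
    qed
  qed
  have "measure Q E \<le> measure Q (E' \<union> R (min u u') (max u u') \<union> R (min v v') (max v v'))"
    using sub sE' sR by (intro Q.finite_measure_mono) auto
  also have "\<dots> \<le> measure Q (E' \<union> R (min u u') (max u u')) + measure Q (R (min v v') (max v v'))"
    using sE' sR by (intro measure_Un_le) auto
  also have "\<dots> \<le> measure Q E' + measure Q (R (min u u') (max u u')) + measure Q (R (min v v') (max v v'))"
    using measure_Un_le[OF sE' sR] by simp
  also have "\<dots> \<le> measure Q E' + real n * (max u u' - min u u') + real n * (max v v' - min v v')"
    using mR[of "min u u'" "max u u'"] mR[of "min v v'" "max v v'"] by (simp add: add_mono)
  also have "\<dots> = measure Q E' + real n * \<bar>u - u'\<bar> + real n * \<bar>v - v'\<bar>"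
    by (simp add: max_def min_def abs_if)
  finally show ?thesis unfolding E_def E'_def .
qed

lemma D_in_D2:
  assumes Q: "prob_space Q" and Qm: "\<And>j. j<n \<Longrightarrow> (\<lambda>w. w j) \<in> borel_measurable Q"
   and unif: "\<And>j t. j<n \<Longrightarrow> t\<in>{0..1} \<Longrightarrow> measure Q {v\<in>space Q. v j \<le> t} = t"
   and sc: "semi_coherent n \<psi>" and sc': "semi_coherent n \<psi>'"
  shows "(\<lambda>u v. measure Q {w\<in>space Q. sys_lifetime n \<psi> w \<le> u \<and> sys_lifetime n \<psi>' w \<le> v}) \<in> D2"
proof -
  interpret Q: prob_space Q by fact
  let ?T = "sys_lifetime n \<psi>" and ?T' = "sys_lifetime n \<psi>'"
  define D where "D u v = measure Q {w\<in>space Q. ?T w \<le> u \<and> ?T' w \<le> v}" for u v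
  have lip: "(2 * real n)-lipschitz_on UNIV (\<lambda>z. D (fst z) (snd z))"
  proof (rule lipschitz_onI)
    fix z z' :: "real \<times> real"
    have "D (fst z) (snd z) \<le> D (fst z') (snd z') + real n * \<bar>fst z - fst z'\<bar> + real n * \<bar>snd z - snd z'\<bar>"
      unfolding D_def by (rule D_bound[OF Q Qm unif sc sc'])
    moreover have "D (fst z') (snd z') \<le> D (fst z) (snd z) + real n * \<bar>fst z' - fst z\<bar> + real n * \<bar>snd z' - snd z\<bar>"
      unfolding D_def by (rule D_bound[OF Q Qm unif sc sc'])
    moreover have "\<bar>fst z - fst z'\<bar> \<le> dist z z'" using dist_fst_le[of z z'] by (simp add: dist_real_def)
    moreover have "\<bar>snd z - snd z'\<bar> \<le> dist z z'" using dist_snd_le[of z z'] by (simp add: dist_real_def)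
    ultimately have "\<bar>D (fst z) (snd z) - D (fst z') (snd z')\<bar> \<le> real n * dist z z' + real n * dist z z'"
      by (smt (verit, best) abs_minus_commute mult_left_mono of_nat_0_le_iff)
    then show "dist (D (fst z) (snd z)) (D (fst z') (snd z')) \<le> 2 * real n * dist z z'"
      by (simp add: dist_real_def)
  qed simp
  have cont: "continuous_on UNIV (\<lambda>z. D (fst z) (snd z))"
    using lipschitz_on_continuous_on[OF lip] .
  have Tm: "?T \<in> borel_measurable Q" "?T' \<in> borel_measurable Q"
    using T_meas[OF sc Qm] T_meas[OF sc' Qm] by auto
  have fm: "(\<lambda>w. (?T w, ?T' w)) \<in> measurable Q (borel :: (real \<times> real) measure)"
    using measurable_Pair[OF Tm] by (simp add: borel_prod)
  define R where "R = distr Q (borel :: (real \<times> real) measure) (\<lambda>w. (?T w, ?T' w))"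
  have R: "prob_space R" unfolding R_def by (rule Q.prob_space_distr[OF fm])
  have sR: "sets R = sets (borel :: (real \<times> real) measure)" unfolding R_def by simp
  have DR: "D u v = measure R ({..u} \<times> {..v})" for u v
    unfolding R_def D_def using fm by (subst measure_distr) (auto intro!: arg_cong[where f="measure Q"] borel_closed closed_Times)
  have s: "\<And>j c. j<n \<Longrightarrow> {w\<in>space Q. w j \<le> c} \<in> sets Q" using Qm le_set_meas by blast
  define G where "G = {w\<in>space Q. \<forall>j<n. 0 \<le> w j \<and> w j \<le> 1}"
  define U where "U = (\<Union>j\<in>{..<n}. {w\<in>space Q. w j \<le> 0} \<union> (space Q - {w\<in>space Q. w j \<le> 1}))"
  have sU: "U \<in> sets Q" unfolding U_def using s by (intro sets.finite_UN sets.Un sets.Diff[OF sets.top]) auto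
  have mU: "measure Q U \<le> 0"
  proof -
    have "measure Q U \<le> (\<Sum>j\<in>{..<n}. measure Q ({w\<in>space Q. w j \<le> 0} \<union> (space Q - {w\<in>space Q. w j \<le> 1})))"
      unfolding U_def using s by (intro Q.finite_measure_subadditive_finite) auto
    also have "\<dots> \<le> (\<Sum>j\<in>{..<n}. measure Q {w\<in>space Q. w j \<le> 0} + measure Q (space Q - {w\<in>space Q. w j \<le> 1}))"
      using s by (intro sum_mono measure_Un_le) auto
    also have "\<dots> = 0" using s unif by (intro sum.neutral) (auto simp: Q.prob_compl)
    finally show ?thesis .
  qed
  have GU: "space Q - U \<subseteq> {w\<in>space Q. (?T w, ?T' w) \<in> {0..1} \<times> {0..1}}"
  proof
    fix w assume w: "w \<in> space Q - U"
    then have "\<forall>j<n. 0 < w j \<and> w j \<le> 1" unfolding U_def by (force simp: not_le)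
    moreover obtain j where j: "j < n" "?T w = w j" using T_mem[OF sc] by blast
    moreover obtain j' where j': "j' < n" "?T' w = w j'" using T_mem[OF sc'] by blast
    ultimately show "w \<in> {w\<in>space Q. (?T w, ?T' w) \<in> {0..1} \<times> {0..1}}" using w by auto
  qed
  have "measure R ({0..1} \<times> {0..1}) = measure Q {w\<in>space Q. (?T w, ?T' w) \<in> {0..1} \<times> {0..1}}"
    unfolding R_def using fm by (subst measure_distr) (auto intro!: arg_cong[where f="measure Q"] borel_closed closed_Times)
  also have "\<dots> = 1"
  proof (rule antisym)
    have "1 - measure Q U = measure Q (space Q - U)" using sU by (simp add: Q.prob_compl)
    also have "\<dots> \<le> measure Q {w\<in>space Q. (?T w, ?T' w) \<in> {0..1} \<times> {0..1}}"
    proof (rule Q.finite_measure_mono[OF GU])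
      have "{w\<in>space Q. (?T w, ?T' w) \<in> {0..1} \<times> {0..1}} = (\<lambda>w. (?T w, ?T' w)) -` ({0..1} \<times> {0..1}) \<inter> space Q" by auto
      then show "{w\<in>space Q. (?T w, ?T' w) \<in> {0..1} \<times> {0..1}} \<in> sets Q"
        using measurable_sets[OF fm borel_closed[OF closed_Times[OF closed_atLeastAtMost closed_atLeastAtMost]]] by simp
    qed
    finally show "1 \<le> measure Q {w\<in>space Q. (?T w, ?T' w) \<in> {0..1} \<times> {0..1}}" using mU by simp
  qed (rule Q.prob_le_1)
  finally have R1: "measure R ({0..1} \<times> {0..1}) = 1" .
  show ?thesis unfolding D2_def D_def[symmetric]
    using cont R sR R1 DR by blast
qed

theorem mainTheorem14:
  fixes n :: nat and C :: "(nat \<Rightarrow> real) \<Rightarrow> real"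
    and \<psi> \<psi>' :: "(nat \<Rightarrow> bool) \<Rightarrow> bool"
  assumes "copula n C" and "semi_coherent n \<psi>" and "semi_coherent n \<psi>'"
  shows "\<exists>D\<in>D2. \<forall>(M :: 'a measure) X F.
           prob_space M \<and> (\<forall>j<n. X j \<in> borel_measurable M) \<and> has_copula_marginal M n X C F
           \<longrightarrow> (\<forall>x y. measure M {\<omega>\<in>space M. sys_lifetime n \<psi> (\<lambda>j. X j \<omega>) \<le> x \<and>
                                              sys_lifetime n \<psi>' (\<lambda>j. X j \<omega>) \<le> y}
                      = D (F x) (F y))"
proof -
  note sc = assms(2) and sc' = assms(3)
  obtain Q where Q: "prob_space Q" and sQ: "sets Q = sets (PiM {..<n} (\<lambda>_. borel :: real measure))"
    and unifQ: "\<forall>j<n. \<forall>t\<in>{0..1}. measure Q {v\<in>space Q. v j \<le> t} = t"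
    and CQ: "\<forall>u. (\<forall>j<n. u j \<in> {0..1}) \<longrightarrow> C u = measure Q {v\<in>space Q. \<forall>j<n. v j \<le> u j}"
    using assms(1) unfolding copula_def by blast
  have Qm: "(\<lambda>w. w j) \<in> borel_measurable Q" if "j < n" for j
    apply (subst measurable_cong_sets[OF sQ refl])
    using that by (intro measurable_component_singleton) auto
  have unif: "\<And>j t. j<n \<Longrightarrow> t\<in>{0..1} \<Longrightarrow> measure Q {v\<in>space Q. v j \<le> t} = t" using unifQ by blast
  have n: "0 < n" using sc_n_pos[OF sc] .
  define D where "D u v = measure Q {w\<in>space Q. sys_lifetime n \<psi> w \<le> u \<and> sys_lifetime n \<psi>' w \<le> v}" for u v
  have D2: "D \<in> D2" unfolding D_def[abs_def] by (rule D_in_D2[OF Q Qm unif sc sc'])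
  show ?thesis
  proof (intro bexI[OF _ D2] allI impI)
    fix M :: "'a measure" and X :: "nat \<Rightarrow> 'a \<Rightarrow> real" and F :: "real \<Rightarrow> real" and x y :: real
    assume H: "prob_space M \<and> (\<forall>j<n. X j \<in> borel_measurable M) \<and> has_copula_marginal M n X C F"
    then have M: "prob_space M" and Xm: "\<And>j. j<n \<Longrightarrow> X j \<in> borel_measurable M"
      and hcm: "has_copula_marginal M n X C F" by auto
    interpret M: prob_space M by fact
    define I where "I = {..<n} \<times> (UNIV :: bool set)"
    define z where "z b = (if b then x else y)" for b
    define A where "A i = {\<omega>\<in>space M. X (fst i) \<omega> \<le> z (snd i)}" for i
    define B where "B i = {w\<in>space Q. w (fst i) \<le> F (z (snd i))}" for i
    define W where "W = {K. (\<exists>A. min_cut_set n \<psi> A \<and> (\<forall>j\<in>A. (j,True)\<in>K)) \<and>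
                            (\<exists>A. min_cut_set n \<psi>' A \<and> (\<forall>j\<in>A. (j,False)\<in>K))}"
    have fI: "finite I" unfolding I_def by simp
    have sA: "A i \<in> sets M" if "i \<in> I" for i
      unfolding A_def using that Xm le_set_meas by (auto simp: I_def)
    have sB: "B i \<in> sets Q" if "i \<in> I" for i
      unfolding B_def using that Qm le_set_meas by (auto simp: I_def)
    have h: "measure M {\<omega>\<in>space M. \<forall>i\<in>S. \<omega> \<in> A i} = measure Q {\<omega>\<in>space Q. \<forall>i\<in>S. \<omega> \<in> B i}"
      if "S \<subseteq> I" for S
    proof -
      have "{\<omega>\<in>space M. \<forall>i\<in>S. \<omega> \<in> A i} = {\<omega>\<in>space M. \<forall>i\<in>S. X (fst i) \<omega> \<le> z (snd i)}"
        unfolding A_def by auto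
      moreover have "{\<omega>\<in>space Q. \<forall>i\<in>S. \<omega> \<in> B i} = {w\<in>space Q. \<forall>i\<in>S. w (fst i) \<le> F (z (snd i))}"
        unfolding B_def by auto
      ultimately show ?thesis
        using key_S[OF M Xm hcm n Q Qm unif, where S=S and z=z] CQ that by (auto simp: I_def)
    qed
    have main: "measure M {\<omega>\<in>space M. {i\<in>I. \<omega> \<in> A i} \<in> W} = measure Q {\<omega>\<in>space Q. {i\<in>I. \<omega> \<in> B i} \<in> W}"
      by (rule atoms_union[OF fI M Q sA sB h])
    note p = mcs_props[OF sc] and p' = mcs_props[OF sc']
    have ex1: "(\<exists>K0. min_cut_set n \<phi> K0 \<and> (\<forall>j\<in>K0. (j,b) \<in> I \<and> \<omega> \<in> A (j,b)))
        \<longleftrightarrow> (\<exists>K0. min_cut_set n \<phi> K0 \<and> (\<forall>j\<in>K0. X j \<omega> \<le> z b))"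
      if "\<omega> \<in> space M" "semi_coherent n \<phi>" for \<omega> b \<phi>
    proof
      assume "\<exists>K0. min_cut_set n \<phi> K0 \<and> (\<forall>j\<in>K0. (j,b) \<in> I \<and> \<omega> \<in> A (j,b))"
      then obtain K0 where K0: "min_cut_set n \<phi> K0" "\<forall>j\<in>K0. (j,b) \<in> I \<and> \<omega> \<in> A (j,b)" by blast
      then have "\<forall>j\<in>K0. X j \<omega> \<le> z b" by (auto simp: A_def)
      then show "\<exists>K0. min_cut_set n \<phi> K0 \<and> (\<forall>j\<in>K0. X j \<omega> \<le> z b)" using K0(1) by blast
    next
      assume "\<exists>K0. min_cut_set n \<phi> K0 \<and> (\<forall>j\<in>K0. X j \<omega> \<le> z b)"
      then obtain K0 where K0: "min_cut_set n \<phi> K0" "\<forall>j\<in>K0. X j \<omega> \<le> z b" by blast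
      have "K0 \<subseteq> {..<n}" using mcs_props(3)[OF that(2) K0(1)] by blast
      then have "\<forall>j\<in>K0. (j,b) \<in> I \<and> \<omega> \<in> A (j,b)" using K0(2) that(1) by (auto simp: A_def I_def)
      then show "\<exists>K0. min_cut_set n \<phi> K0 \<and> (\<forall>j\<in>K0. (j,b) \<in> I \<and> \<omega> \<in> A (j,b))" using K0(1) by blast
    qed
    have ex2: "(\<exists>K0. min_cut_set n \<phi> K0 \<and> (\<forall>j\<in>K0. (j,b) \<in> I \<and> w \<in> B (j,b)))
        \<longleftrightarrow> (\<exists>K0. min_cut_set n \<phi> K0 \<and> (\<forall>j\<in>K0. w j \<le> F (z b)))"
      if "w \<in> space Q" "semi_coherent n \<phi>" for w b \<phi>
    proof
      assume "\<exists>K0. min_cut_set n \<phi> K0 \<and> (\<forall>j\<in>K0. (j,b) \<in> I \<and> w \<in> B (j,b))"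
      then obtain K0 where K0: "min_cut_set n \<phi> K0" "\<forall>j\<in>K0. (j,b) \<in> I \<and> w \<in> B (j,b)" by blast
      then have "\<forall>j\<in>K0. w j \<le> F (z b)" by (auto simp: B_def)
      then show "\<exists>K0. min_cut_set n \<phi> K0 \<and> (\<forall>j\<in>K0. w j \<le> F (z b))" using K0(1) by blast
    next
      assume "\<exists>K0. min_cut_set n \<phi> K0 \<and> (\<forall>j\<in>K0. w j \<le> F (z b))"
      then obtain K0 where K0: "min_cut_set n \<phi> K0" "\<forall>j\<in>K0. w j \<le> F (z b)" by blast
      have "K0 \<subseteq> {..<n}" using mcs_props(3)[OF that(2) K0(1)] by blast
      then have "\<forall>j\<in>K0. (j,b) \<in> I \<and> w \<in> B (j,b)" using K0(2) that(1) by (auto simp: B_def I_def)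
      then show "\<exists>K0. min_cut_set n \<phi> K0 \<and> (\<forall>j\<in>K0. (j,b) \<in> I \<and> w \<in> B (j,b))" using K0(1) by blast
    qed
    have e1: "{\<omega>\<in>space M. sys_lifetime n \<psi> (\<lambda>j. X j \<omega>) \<le> x \<and> sys_lifetime n \<psi>' (\<lambda>j. X j \<omega>) \<le> y}
        = {\<omega>\<in>space M. {i\<in>I. \<omega> \<in> A i} \<in> W}"
    proof (intro set_eqI)
      fix \<omega>
      show "\<omega> \<in> {\<omega>\<in>space M. sys_lifetime n \<psi> (\<lambda>j. X j \<omega>) \<le> x \<and> sys_lifetime n \<psi>' (\<lambda>j. X j \<omega>) \<le> y}
        \<longleftrightarrow> \<omega> \<in> {\<omega>\<in>space M. {i\<in>I. \<omega> \<in> A i} \<in> W}"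
      proof (cases "\<omega> \<in> space M")
        case True
        show ?thesis
          unfolding mem_Collect_eq W_def T_le[OF sc] T_le[OF sc'] ex1[OF True sc, of True] ex1[OF True sc', of False]
          by (simp add: z_def)
      qed simp
    qed
    have e2: "{w\<in>space Q. sys_lifetime n \<psi> w \<le> F x \<and> sys_lifetime n \<psi>' w \<le> F y}
        = {\<omega>\<in>space Q. {i\<in>I. \<omega> \<in> B i} \<in> W}"
    proof (intro set_eqI)
      fix w
      show "w \<in> {w\<in>space Q. sys_lifetime n \<psi> w \<le> F x \<and> sys_lifetime n \<psi>' w \<le> F y}
        \<longleftrightarrow> w \<in> {\<omega>\<in>space Q. {i\<in>I. \<omega> \<in> B i} \<in> W}"
      proof (cases "w \<in> space Q")
        case True
        show ?thesis
          unfolding mem_Collect_eq W_def T_le[OF sc] T_le[OF sc'] ex2[OF True sc, of True] ex2[OF True sc', of False]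
          by (simp add: z_def)
      qed simp
    qed
    show "measure M {\<omega>\<in>space M. sys_lifetime n \<psi> (\<lambda>j. X j \<omega>) \<le> x \<and> sys_lifetime n \<psi>' (\<lambda>j. X j \<omega>) \<le> y}
        = D (F x) (F y)"
      unfolding e1 main D_def e2 ..
  qed
qed

end
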